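(* Let $\Delta^{-1},\varepsilon\gg p\gg\mu\gg d^{-1}$. Let $G$ be a graph with minimum degree $\delta(G)\ge\varepsilon d$ that contains no $p$-cut-dense subgraph of order $\mu d$. Then every set $S\subseteq V(G)$ with $|S|\le 10d$ satisfies $|N(S)|\ge 10\Delta|S|$.
   Context: A graph $F$ is $p$-cut-dense if for every partition $V(F)=A\cup B$ into disjoint sets, the number of edges of $F$ between $A$ and $B$ is at least $p|A||B|$. $N(S)$ is the set of vertices adjacent to some vertex of $S$. The hierarchy means: given $\Delta,\varepsilon$, $p$ is sufficiently small; given $p$, $\mu$ is sufficiently small; given $\mu$, $d$ is sufficiently large. *)

theory Defs
  imports Complex_Main
begin

definition graph :: "'a set \<Rightarrow> 'a set set \<Rightarrow> bool" where
  "graph V E \<longleftrightarrow> finite V \<and> (\<forall>e\<in>E. e \<subseteq> V \<and> card e = 2)"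

definition degree :: "'a set set \<Rightarrow> 'a \<Rightarrow> nat" where
  "degree E v = card {u. {u, v} \<in> E}"

definition nbhd :: "'a set set \<Rightarrow> 'a set \<Rightarrow> 'a set" where
  "nbhd E S = {u. \<exists>v\<in>S. {u, v} \<in> E}"

definition subgraph :: "'a set \<Rightarrow> 'a set set \<Rightarrow> 'a set \<Rightarrow> 'a set set \<Rightarrow> bool" where
  "subgraph U F V E \<longleftrightarrow> U \<subseteq> V \<and> F \<subseteq> E \<and> (\<forall>e\<in>F. e \<subseteq> U)"

definition edges_between :: "'a set set \<Rightarrow> 'a set \<Rightarrow> 'a set \<Rightarrow> nat" where
  "edges_between F A B = card {e\<in>F. \<exists>a\<in>A. \<exists>b\<in>B. e = {a, b}}"

definition cut_dense :: "real \<Rightarrow> 'a set \<Rightarrow> 'a set set \<Rightarrow> bool" where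
  "cut_dense p U F \<longleftrightarrow>
     (\<forall>A B. A \<inter> B = {} \<and> A \<union> B = U \<longrightarrow>
        real (edges_between F A B) \<ge> p * real (card A) * real (card B))"

end

theory Submission
  imports Defs
begin

definition pc :: "'a set set \<Rightarrow> 'a set \<Rightarrow> 'a set \<Rightarrow> nat" where
  "pc E X Y = card {(x,y). x \<in> X \<and> y \<in> Y \<and> {x,y} \<in> E}"

lemma pc_set_sub: "{(x,y). x \<in> X \<and> y \<in> Y \<and> {x,y} \<in> E} \<subseteq> X \<times> Y"
  by auto

lemma pc_le: "finite X \<Longrightarrow> finite Y \<Longrightarrow> pc E X Y \<le> card X * card Y"
  unfolding pc_def using card_mono[OF _ pc_set_sub, of X Y E] by (simp add: card_cartesian_product)

lemma pc_sym: "pc E A B = pc E B A"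
proof -
  have "{(x,y). x \<in> B \<and> y \<in> A \<and> {x,y} \<in> E} = prod.swap ` {(x,y). x \<in> A \<and> y \<in> B \<and> {x,y} \<in> E}"
    by (auto simp: image_iff insert_commute)
  then show ?thesis unfolding pc_def by (simp add: card_image)
qed

lemma pc_split:
  assumes "finite A" "finite B" "A \<inter> B = {}"
  shows "pc E (A \<union> B) (A \<union> B) = pc E A A + pc E B B + 2 * pc E A B"
proof -
  define S where "S = (\<lambda>X Y. {(x,y). x \<in> X \<and> y \<in> Y \<and> {x,y} \<in> E})"
  have pcS: "pc E X Y = card (S X Y)" for X Y unfolding pc_def S_def ..
  have fin: "finite (S X Y)" if "finite X" "finite Y" for X Y
    unfolding S_def using finite_subset[OF pc_set_sub finite_cartesian_product[OF that]] .
  have eq: "S (A \<union> B) (A \<union> B) = (S A A \<union> S B B) \<union> (S A B \<union> S B A)"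
    unfolding S_def by blast
  have d1: "(S A A \<union> S B B) \<inter> (S A B \<union> S B A) = {}" unfolding S_def using assms(3) by blast
  have d2: "S A A \<inter> S B B = {}" unfolding S_def using assms(3) by blast
  have d3: "S A B \<inter> S B A = {}" unfolding S_def using assms(3) by blast
  have "card (S (A \<union> B) (A \<union> B)) = card (S A A \<union> S B B) + card (S A B \<union> S B A)"
    unfolding eq using d1 fin assms(1,2) by (intro card_Un_disjoint) auto
  also have "card (S A A \<union> S B B) = card (S A A) + card (S B B)"
    using d2 fin assms(1,2) by (intro card_Un_disjoint) auto
  also have "card (S A B \<union> S B A) = card (S A B) + card (S B A)"
    using d3 fin assms(1,2) by (intro card_Un_disjoint) auto
  finally show ?thesis using pc_sym[of E B A] unfolding pcS by simp
qed

lemma pc_eb: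
  assumes "finite U" "A \<inter> B = {}" "A \<union> B = U"
  shows "pc E A B \<le> edges_between {e\<in>E. e \<subseteq> U} A B"
proof -
  let ?T = "{e\<in>{e\<in>E. e \<subseteq> U}. \<exists>a\<in>A. \<exists>b\<in>B. e = {a, b}}"
  let ?S = "{(x,y). x \<in> A \<and> y \<in> B \<and> {x,y} \<in> E}"
  have finT: "finite ?T" using assms(1) by (rule finite_subset[rotated, OF finite_Pow_iff[THEN iffD2]]) auto
  have inj: "inj_on (\<lambda>(x,y). {x,y}) ?S"
    using assms(2) by (auto simp: inj_on_def doubleton_eq_iff)
  have sub: "(\<lambda>(x,y). {x,y}) ` ?S \<subseteq> ?T" using assms by auto
  have "card ?S = card ((\<lambda>(x,y). {x,y}) ` ?S)" using card_image[OF inj] by simp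
  also have "\<dots> \<le> card ?T" by (rule card_mono[OF finT sub])
  finally show ?thesis unfolding pc_def edges_between_def .
qed

lemma deg_sum:
  assumes "graph V E" "S \<subseteq> V"
  shows "(\<Sum>v\<in>S. degree E v) \<le> pc E (S \<union> nbhd E S) (S \<union> nbhd E S)"
proof -
  have finV: "finite V" using assms(1) unfolding graph_def by auto
  have nV: "{u. {u,v} \<in> E} \<subseteq> V" for v using assms(1) unfolding graph_def by auto
  have finN: "finite {u. {u,v} \<in> E}" for v using finite_subset[OF nV finV] .
  have finS: "finite S" using finite_subset[OF assms(2) finV] .
  have nbV: "nbhd E S \<subseteq> V" using nV unfolding nbhd_def by auto
  let ?W = "S \<union> nbhd E S"
  have finW: "finite ?W" using finS nbV finV finite_subset by blast
  have "(\<Sum>v\<in>S. degree E v) = card (Sigma S (\<lambda>v. {u. {u,v} \<in> E}))"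
    unfolding degree_def using finS finN by (simp add: card_SigmaI)
  also have "\<dots> = card (prod.swap ` Sigma S (\<lambda>v. {u. {u,v} \<in> E}))"
    by (simp add: card_image)
  also have "\<dots> \<le> pc E ?W ?W" unfolding pc_def
  proof (rule card_mono[OF finite_subset[OF pc_set_sub]])
    show "finite (?W \<times> ?W)" using finW by simp
    show "prod.swap ` Sigma S (\<lambda>v. {u. {u,v} \<in> E}) \<subseteq> {(x,y). x \<in> ?W \<and> y \<in> ?W \<and> {x,y} \<in> E}"
    proof
      fix z assume "z \<in> prod.swap ` Sigma S (\<lambda>v. {u. {u,v} \<in> E})"
      then obtain u v where z: "z = (u, v)" and v: "v \<in> S" and uv: "{u,v} \<in> E" by auto
      have "u \<in> nbhd E S" unfolding nbhd_def using v uv by blast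
      then show "z \<in> {(x,y). x \<in> ?W \<and> y \<in> ?W \<and> {x,y} \<in> E}" using z v uv by blast
    qed
  qed
  finally show ?thesis .
qed

lemma key:
  fixes c p :: real and E :: "'a set set"
  defines "psi \<equiv> \<lambda>U. real (pc E U U) - c * real (card U) - p * real (card U) ^ 2"
  assumes finW: "finite W" and W0: "psi W \<ge> 0" "W \<noteq> {}"
  shows "\<exists>U\<subseteq>W. U \<noteq> {} \<and> psi U \<ge> 0 \<and> cut_dense p U {e\<in>E. e \<subseteq> U}"
proof -
  let ?P = "\<lambda>U. U \<subseteq> W \<and> U \<noteq> {} \<and> psi U \<ge> 0"
  define Q where "Q = ?P"
  have QW: "Q W" using W0 unfolding Q_def by blast
  have ex: "\<exists>U. Q U \<and> (\<forall>U'. Q U' \<longrightarrow> card U \<le> card U')"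
    by (rule ex_has_least_nat[where P=Q and k=W and m=card, OF QW])
  obtain U where QU: "Q U" and minQ: "\<forall>U'. Q U' \<longrightarrow> card U \<le> card U'"
    using ex by blast
  have PU: "?P U" using QU unfolding Q_def .
  have minU: "\<forall>U'. ?P U' \<longrightarrow> card U \<le> card U'" using minQ unfolding Q_def .
  have finU: "finite U" using PU finW finite_subset by blast
  have "cut_dense p U {e\<in>E. e \<subseteq> U}"
    unfolding cut_dense_def
  proof (intro allI impI)
    fix A B assume AB: "A \<inter> B = {} \<and> A \<union> B = U"
    show "p * real (card A) * real (card B) \<le> real (edges_between {e\<in>E. e \<subseteq> U} A B)"
    proof (cases "A = {} \<or> B = {}")
      case True then show ?thesis by auto
    next
      case False
      have finA: "finite A" and finB: "finite B" using AB finU by auto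
      show ?thesis
      proof (rule ccontr)
        assume "\<not> ?thesis"
        then have lt: "real (pc E A B) < p * real (card A) * real (card B)"
          using pc_eb[OF finU, of A B E] AB by linarith
        have cU: "card U = card A + card B" using AB finA finB card_Un_disjoint by blast
        have pU: "pc E U U = pc E A A + pc E B B + 2 * pc E A B"
          using pc_split[OF finA finB, of E] AB by simp
        have sq: "real (card U) ^ 2 = real (card A) ^ 2 + real (card B) ^ 2 + 2 * real (card A) * real (card B)"
          unfolding cU by (simp add: power2_eq_square algebra_simps)
        have pr: "real (pc E U U) = real (pc E A A) + real (pc E B B) + 2 * real (pc E A B)"
          unfolding pU by simp
        have "psi A + psi B > psi U"
          unfolding psi_def using sq pr lt cU by (simp add: algebra_simps)
        then have "psi A > 0 \<or> psi B > 0" using PU by linarith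
        moreover have "card A < card U" "card B < card U" using cU False finA finB by auto
        moreover have "A \<subseteq> W" "B \<subseteq> W" using AB PU by auto
        ultimately show False using minU False by (meson less_le_trans not_le less_imp_le)
      qed
    qed
  qed
  then show ?thesis using PU by blast
qed

theorem lemma3p15:
  shows "\<forall>(\<Delta>::real) > 0. \<forall>(\<epsilon>::real) > 0. \<exists>p0::real > 0. \<forall>p. 0 < p \<and> p \<le> p0 \<longrightarrow>
    (\<exists>\<mu>0::real > 0. \<forall>\<mu>. 0 < \<mu> \<and> \<mu> \<le> \<mu>0 \<longrightarrow>
      (\<exists>d0::real. \<forall>d \<ge> d0. \<forall>(V::'a set) (E::'a set set).
         graph V E \<and> (\<forall>v\<in>V. real (degree E v) \<ge> \<epsilon> * d) \<and>
         \<not> (\<exists>U F. subgraph U F V E \<and> real (card U) \<ge> \<mu> * d \<and> cut_dense p U F)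
         \<longrightarrow> (\<forall>S \<subseteq> V. real (card S) \<le> 10 * d \<longrightarrow>
                real (card (nbhd E S)) \<ge> 10 * \<Delta> * real (card S))))"
proof (intro allI impI)
  fix \<Delta> \<epsilon> :: real
  assume D: "\<Delta> > 0" and e: "\<epsilon> > 0"
  define K where "K = 1 + 10 * \<Delta>"
  have K1: "K \<ge> 1" using D K_def by simp
  show "\<exists>p0::real > 0. \<forall>p. 0 < p \<and> p \<le> p0 \<longrightarrow>
    (\<exists>\<mu>0::real > 0. \<forall>\<mu>. 0 < \<mu> \<and> \<mu> \<le> \<mu>0 \<longrightarrow>
      (\<exists>d0::real. \<forall>d \<ge> d0. \<forall>(V::'a set) (E::'a set set).
         graph V E \<and> (\<forall>v\<in>V. real (degree E v) \<ge> \<epsilon> * d) \<and>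
         \<not> (\<exists>U F. subgraph U F V E \<and> real (card U) \<ge> \<mu> * d \<and> cut_dense p U F)
         \<longrightarrow> (\<forall>S \<subseteq> V. real (card S) \<le> 10 * d \<longrightarrow>
                real (card (nbhd E S)) \<ge> 10 * \<Delta> * real (card S))))"
  proof (rule exI[of _ "\<epsilon> / (20 * K^2)"], intro conjI allI impI)
    show "\<epsilon> / (20 * K^2) > 0" using e K1 by simp
    fix p :: real assume p: "0 < p \<and> p \<le> \<epsilon> / (20 * K^2)"
    show "\<exists>\<mu>0::real > 0. \<forall>\<mu>. 0 < \<mu> \<and> \<mu> \<le> \<mu>0 \<longrightarrow>
      (\<exists>d0::real. \<forall>d \<ge> d0. \<forall>(V::'a set) (E::'a set set).
         graph V E \<and> (\<forall>v\<in>V. real (degree E v) \<ge> \<epsilon> * d) \<and>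
         \<not> (\<exists>U F. subgraph U F V E \<and> real (card U) \<ge> \<mu> * d \<and> cut_dense p U F)
         \<longrightarrow> (\<forall>S \<subseteq> V. real (card S) \<le> 10 * d \<longrightarrow>
                real (card (nbhd E S)) \<ge> 10 * \<Delta> * real (card S)))"
    proof (rule exI[of _ "\<epsilon> / (2 * K)"], intro conjI allI impI exI[of _ "\<epsilon> / (2 * K)"])
      show "\<epsilon> / (2 * K) > 0" using e K1 by simp
      fix \<mu> d :: real and V :: "'a set" and E :: "'a set set" and S :: "'a set"
      assume mu: "0 < \<mu> \<and> \<mu> \<le> \<epsilon> / (2 * K)" and d00: "\<epsilon> / (2 * K) \<le> d"
      have d0: "0 \<le> d" using d00 e K1 by (smt (verit) divide_pos_pos)
      assume H: "graph V E \<and> (\<forall>v\<in>V. real (degree E v) \<ge> \<epsilon> * d) \<and>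
         \<not> (\<exists>U F. subgraph U F V E \<and> real (card U) \<ge> \<mu> * d \<and> cut_dense p U F)"
      assume SV: "S \<subseteq> V" and Sd: "real (card S) \<le> 10 * d"
      show "real (card (nbhd E S)) \<ge> 10 * \<Delta> * real (card S)"
      proof (rule ccontr)
        assume nlt: "\<not> ?thesis"
        have finV: "finite V" using H unfolding graph_def by auto
        have finS: "finite S" using SV finV finite_subset by blast
        have nbV: "nbhd E S \<subseteq> V" using H unfolding graph_def nbhd_def by auto
        have finN: "finite (nbhd E S)" using nbV finV finite_subset by blast
        define W where "W = S \<union> nbhd E S"
        have WV: "W \<subseteq> V" using SV nbV W_def by auto
        have finW: "finite W" using WV finV finite_subset by blast
        have Sne: "S \<noteq> {}" using nlt by auto
        then have Wne: "W \<noteq> {}" using W_def by auto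
        have cS: "real (card S) > 0" using Sne finS by auto
        have cW: "real (card W) \<le> K * real (card S)"
        proof -
          have "card W \<le> card S + card (nbhd E S)" unfolding W_def by (rule card_Un_le)
          then show ?thesis using nlt K_def by (simp add: algebra_simps)
        qed
        have degs: "\<epsilon> * d * real (card S) \<le> real (pc E W W)"
        proof -
          have "\<epsilon> * d * real (card S) = (\<Sum>v\<in>S. \<epsilon> * d)" by simp
          also have "\<dots> \<le> (\<Sum>v\<in>S. real (degree E v))" using H SV by (intro sum_mono) auto
          also have "\<dots> = real (\<Sum>v\<in>S. degree E v)" by simp
          also have "\<dots> \<le> real (pc E W W)" using deg_sum[of V E S] H SV unfolding W_def by (simp only: of_nat_le_iff)
          finally show ?thesis .
        qed
        define c where "c = \<epsilon> * d / (2 * K)"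
        have c0: "c \<ge> 0" using c_def e d0 K1 by simp
        have t1: "c * real (card W) \<le> \<epsilon> * d * real (card S) / 2"
        proof -
          have "c * real (card W) \<le> c * (K * real (card S))" using cW c0 by (rule mult_left_mono)
          also have "\<dots> = \<epsilon> * d * real (card S) / 2" using K1 by (simp add: c_def field_simps)
          finally show ?thesis .
        qed
        have t2: "p * real (card W) ^ 2 \<le> \<epsilon> * d * real (card S) / 2"
        proof -
          have "real (card W) ^ 2 \<le> (K * real (card S)) ^ 2" using cW by (intro power_mono) auto
          then have "p * real (card W) ^ 2 \<le> p * (K * real (card S)) ^ 2" using p by (intro mult_left_mono) auto
          also have "\<dots> = (p * K^2) * real (card S) * real (card S)" by (simp add: power2_eq_square)
          also have "\<dots> \<le> (\<epsilon> / 20) * real (card S) * real (card S)"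
          proof -
            have "p * K^2 \<le> \<epsilon> / 20" using p K1 by (simp add: field_simps)
            then show ?thesis by (intro mult_right_mono) auto
          qed
          also have "\<dots> \<le> (\<epsilon> / 20) * real (card S) * (10 * d)"
            using Sd e by (intro mult_left_mono) auto
          also have "\<dots> = \<epsilon> * d * real (card S) / 2" by simp
          finally show ?thesis .
        qed
        have psiW: "real (pc E W W) - c * real (card W) - p * real (card W) ^ 2 \<ge> 0"
          using degs t1 t2 by linarith
        obtain U where U: "U \<subseteq> W" "U \<noteq> {}"
          and psiU: "real (pc E U U) - c * real (card U) - p * real (card U) ^ 2 \<ge> 0"
          and cd: "cut_dense p U {e\<in>E. e \<subseteq> U}"
          using key[where c=c and p=p and E=E and W=W, OF finW _ Wne] psiW by auto
        have finU: "finite U" using U finW finite_subset by blast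
        have cU: "real (card U) > 0" using U finU by auto
        have "real (pc E U U) \<le> real (card U) * real (card U)"
          using pc_le[OF finU finU, of E] by (metis of_nat_le_iff of_nat_mult)
        moreover have "p * real (card U) ^ 2 \<ge> 0" using p by simp
        ultimately have "c * real (card U) \<le> real (card U) * real (card U)"
          using psiU by linarith
        then have "c \<le> real (card U)" using cU by simp
        moreover have "\<mu> * d \<le> c"
        proof -
          have "\<mu> * d \<le> (\<epsilon> / (2 * K)) * d" using mu d0 by (intro mult_right_mono) auto
          then show ?thesis by (simp add: c_def)
        qed
        moreover have "subgraph U {e\<in>E. e \<subseteq> U} V E" unfolding subgraph_def using U WV by auto
        ultimately have "\<mu> * d \<le> real (card U)" "subgraph U {e\<in>E. e \<subseteq> U} V E" by linarith+
        then show False using H cd by blast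
      qed
    qed
  qed
qed

end
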